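(* Let $f$ be a complex-valued function that is holomorphic on an open neighborhood of the closed upper half-plane $\{x+yi : y\ge 0\}$ except at finitely many isolated singular points, each of which has strictly positive imaginary part. Suppose that: (i) for all real $x$ with $|x|$ sufficiently large, the improper integral $\int_{0}^{\infty} f(x+yi)\,dy$ converges, and $\int_{0}^{\infty} f(x+yi)\,dy \to 0$ as $x\to+\infty$ and as $x\to-\infty$; (ii) for each bounded interval $I\subset\mathbb{R}$, $\int_{I} f(x+yi)\,dx \to 0$ as $y\to\infty$. Then the improper integral $\int_{-\infty}^{\infty} f(x)\,dx$ (that is, $\lim_{A,B\to+\infty}\int_{-A}^{B} f(x)\,dx$) exists and equals $2\pi i$ times the sum of the residues of $f$ at its singular points in the upper half-plane.
   Context: The residue of $f$ at an isolated singularity $z_0$ is the coefficient of $(z-z_0)^{-1}$ in the Laurent expansion of $f$ about $z_0$. *)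

theory Defs
  imports "HOL-Complex_Analysis.Complex_Analysis"
begin

definition has_improper_integral_0_inf :: "(real \<Rightarrow> complex) \<Rightarrow> complex \<Rightarrow> bool" where
  "has_improper_integral_0_inf g L \<longleftrightarrow>
     (\<forall>T\<ge>0. g integrable_on {0..T}) \<and> ((\<lambda>T. integral {0..T} g) \<longlongrightarrow> L) at_top"

end

theory Submission
  imports Defs
begin

lemma has_contour_integral_linepath_same_Im_iff':
  fixes f :: "complex \<Rightarrow> complex"
  assumes "a < b"
  shows "(f has_contour_integral I) (linepath (Complex a c) (Complex b c)) \<longleftrightarrow>
         ((\<lambda>x. f (Complex x c)) has_integral I) {a..b}"
proof -
  define g where "g = (\<lambda>w. f (w + \<i> * of_real c))"
  have 1: "(g has_contour_integral I) (linepath (of_real a) (of_real b)) \<longleftrightarrow>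
        ((\<lambda>x. g (of_real x)) has_integral I) {a..b}"
    using has_contour_integral_linepath_Reals_iff[of "of_real a" "of_real b" g I] assms by simp
  have 2: "(\<lambda>x. g (of_real x)) = (\<lambda>x. f (Complex x c))"
    by (simp add: g_def Complex_eq)
  have 3: "(\<lambda>t. g (linepath (of_real a) (of_real b) t) * (of_real b - of_real a))
        = (\<lambda>t. f (linepath (Complex a c) (Complex b c) t) * (Complex b c - Complex a c))"
  proof (rule ext)
    fix t
    have e1: "linepath (Complex a c) (Complex b c) t = linepath (of_real a) (of_real b) t + \<i> * of_real c"
      by (simp add: linepath_def complex_eq_iff algebra_simps)
    have e2: "Complex b c - Complex a c = of_real b - of_real a"
      by (simp add: complex_eq_iff)
    show "g (linepath (of_real a) (of_real b) t) * (of_real b - of_real a)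
        = f (linepath (Complex a c) (Complex b c) t) * (Complex b c - Complex a c)"
      by (simp only: e1 e2 g_def)
  qed
  have "(g has_contour_integral I) (linepath (of_real a) (of_real b)) \<longleftrightarrow>
        (f has_contour_integral I) (linepath (Complex a c) (Complex b c))"
    unfolding has_contour_integral_linepath 3 ..
  with 1 2 show ?thesis by simp
qed

theorem theorem1:
  fixes f :: "complex \<Rightarrow> complex" and U S :: "complex set"
  assumes "open U"
    and "{z. Im z \<ge> 0} \<subseteq> U"
    and "finite S" and "S \<subseteq> U"
    and "\<forall>z\<in>S. Im z > 0"
    and "f holomorphic_on (U - S)"
    and cond_i: "\<exists>R F. (\<forall>x::real. \<bar>x\<bar> \<ge> R \<longrightarrow>
                     has_improper_integral_0_inf (\<lambda>y. f (Complex x y)) (F x))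
                 \<and> (F \<longlongrightarrow> 0) at_top \<and> (F \<longlongrightarrow> 0) at_bot"
    and cond_ii: "\<forall>a b::real.
                 ((\<lambda>y. integral {a..b} (\<lambda>x. f (Complex x y))) \<longlongrightarrow> 0) at_top"
  shows "(\<forall>A B::real. (\<lambda>x. f (complex_of_real x)) integrable_on {-A..B})
     \<and> ((\<lambda>(A, B). integral {-A..B} (\<lambda>x. f (complex_of_real x)))
          \<longlongrightarrow> 2 * pi * \<i> * (\<Sum>z\<in>S. residue f z)) (at_top \<times>\<^sub>F at_top)"
proof -
  obtain R F where RF: "\<And>x::real. \<bar>x\<bar> \<ge> R \<Longrightarrow>
                     has_improper_integral_0_inf (\<lambda>y. f (Complex x y)) (F x)"
    and Ftop: "(F \<longlongrightarrow> 0) at_top" and Fbot: "(F \<longlongrightarrow> 0) at_bot"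
    using cond_i by blast
  define s where "s = connected_component_set U 0"
  have "open s" unfolding s_def using assms(1) by (rule open_connected_component)
  have "connected s" unfolding s_def by simp
  have up: "{z. Im z \<ge> 0} \<subseteq> s" unfolding s_def
    by (rule connected_component_maximal) (use assms(2) convex_connected convex_halfspace_Im_ge in auto)
  have "s \<subseteq> U" unfolding s_def by (rule connected_component_subset)
  have holo: "f holomorphic_on s - S"
    using assms(6) \<open>s \<subseteq> U\<close> holomorphic_on_subset by blast
  have cont: "continuous_on (s - S) f" using holo holomorphic_on_imp_continuous_on by blast
  have realin: "complex_of_real x \<in> s" "complex_of_real x \<notin> S" for x
    using up assms(5) by auto
  have contR: "continuous_on A (\<lambda>x. f (complex_of_real x))" for A
    by (rule continuous_on_compose2[OF cont]) (auto intro!: continuous_intros simp: realin(1) realin(2))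
  have intg: "\<forall>A B::real. (\<lambda>x. f (complex_of_real x)) integrable_on {-A..B}"
    using contR integrable_continuous_interval by blast
  define \<Sigma> where "\<Sigma> = 2 * pi * \<i> * (\<Sum>z\<in>S. residue f z)"
  define M where "M = max R (Max (insert 0 ((\<lambda>z. \<bar>Re z\<bar>) ` S))) + 1"
  define Y0 where "Y0 = Max (insert 0 (Im ` S)) + 1"
  have mx1: "\<bar>Re z\<bar> \<le> Max (insert 0 ((\<lambda>z. \<bar>Re z\<bar>) ` S))" "0 \<le> Max (insert 0 ((\<lambda>z. \<bar>Re z\<bar>) ` S))"
    if "z \<in> S" for z using assms(3) that by (auto intro!: Max_ge)
  have mx0: "0 \<le> Max (insert 0 ((\<lambda>z. \<bar>Re z\<bar>) ` S))" using assms(3) by (auto intro!: Max_ge)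
  have my1: "Im z \<le> Max (insert 0 (Im ` S))" if "z \<in> S" for z using assms(3) that by (auto intro!: Max_ge)
  have my0: "0 \<le> Max (insert 0 (Im ` S))" using assms(3) by (auto intro!: Max_ge)
  have M: "\<And>z. z \<in> S \<Longrightarrow> \<bar>Re z\<bar> < M" "M > R" "M > 0"
    unfolding M_def using mx1 mx0 by force+
  have Y0: "\<And>z. z \<in> S \<Longrightarrow> Im z < Y0" "Y0 > 0"
    unfolding Y0_def using my1 my0 by force+
  have key: "integral {-A..B} (\<lambda>x. f (complex_of_real x)) = \<Sigma> - \<i> * F B + \<i> * F (-A)"
    if A: "A \<ge> M" and B: "B \<ge> M" for A B
  proof -
    define I where "I = integral {-A..B} (\<lambda>x. f (complex_of_real x))"
    define V where "V = (\<lambda>x Y. integral {0..Y} (\<lambda>y. f (Complex x y)))"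
    define H where "H = (\<lambda>Y. integral {-A..B} (\<lambda>x. f (Complex x Y)))"
    have eq: "I = \<Sigma> - \<i> * V B Y + H Y + \<i> * V (-A) Y" if Y: "Y \<ge> Y0" for Y
    proof -
      define a1 where "a1 = Complex (-A) 0"
      define a2 where "a2 = Complex B 0"
      define a3 where "a3 = Complex B Y"
      define a4 where "a4 = Complex (-A) Y"
      have le: "Re a1 \<le> Re a3" "Im a1 \<le> Im a3" using A B M Y Y0 by (auto simp: a1_def a3_def)
      have Sbox: "p \<in> box a1 a3" if "p \<in> S" for p
        using M(1)[OF that] Y0(1)[OF that] assms(5) that Y A B
        by (auto simp: in_box_complex_iff a1_def a3_def)
      have PI: "path_image (rectpath a1 a3) \<subseteq> s - S"
      proof
        fix z assume z: "z \<in> path_image (rectpath a1 a3)"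
        then have "z \<in> cbox a1 a3 - box a1 a3" using path_image_rectpath_cbox_minus_box[OF le] by simp
        then show "z \<in> s - S" using up Sbox by (auto simp: in_cbox_complex_iff a1_def)
      qed
      have res: "contour_integral (rectpath a1 a3) f =
          2 * pi * \<i> * (\<Sum>p\<in>S. winding_number (rectpath a1 a3) p * residue f p)"
      proof (rule Residue_theorem[OF \<open>open s\<close> \<open>connected s\<close> assms(3) holo])
        show "path_image (rectpath a1 a3) \<subseteq> s - S" by (rule PI)
        show "\<forall>z. z \<notin> s \<longrightarrow> winding_number (rectpath a1 a3) z = 0"
        proof (intro allI impI)
          fix z assume "z \<notin> s"
          then have "Im z < 0" using up not_le by blast
          then have "z \<notin> cbox a1 a3" by (auto simp: in_cbox_complex_iff a1_def)
          then show "winding_number (rectpath a1 a3) z = 0"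
            by (rule winding_number_rectpath_outside[OF le])
        qed
      qed auto
      have res2: "contour_integral (rectpath a1 a3) f = \<Sigma>"
        unfolding res \<Sigma>_def using Sbox winding_number_rectpath by simp
      have PIeq: "path_image (rectpath a1 a3) = closed_segment a1 a2 \<union> closed_segment a2 a3
          \<union> closed_segment a3 a4 \<union> closed_segment a4 a1"
        by (simp add: rectpath_def Let_def path_image_join a1_def a2_def a3_def a4_def Un_assoc)
      have cs: "continuous_on (closed_segment a1 a2) f" "continuous_on (closed_segment a2 a3) f"
               "continuous_on (closed_segment a3 a4) f" "continuous_on (closed_segment a4 a1) f"
        using continuous_on_subset[OF cont] PI unfolding PIeq by auto
      have ci: "f contour_integrable_on linepath a1 a2" "f contour_integrable_on linepath a2 a3"
               "f contour_integrable_on linepath a3 a4" "f contour_integrable_on linepath a4 a1"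
        using cs contour_integrable_continuous_linepath by auto
      have split: "contour_integral (rectpath a1 a3) f =
          contour_integral (linepath a1 a2) f + contour_integral (linepath a2 a3) f +
          contour_integral (linepath a3 a4) f + contour_integral (linepath a4 a1) f"
        unfolding rectpath_def Let_def
        using ci by (simp add: contour_integral_join a1_def a2_def a3_def a4_def valid_path_join
            contour_integrable_joinI add.assoc)
      have c1: "contour_integral (linepath a1 a2) f = I"
        unfolding I_def using A B M
        by (subst contour_integral_linepath_Reals_eq) (auto simp: a1_def a2_def complex_is_Real_iff)
      have c2: "contour_integral (linepath a2 a3) f = \<i> * V B Y"
      proof -
        have "(f has_contour_integral contour_integral (linepath a2 a3) f) (linepath a2 a3)"
          using ci(2) has_contour_integral_integral by blast
        then have "((\<lambda>y. f (Complex B y)) has_integral (-\<i> * contour_integral (linepath a2 a3) f)) {0..Y}"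
          using has_contour_integral_linepath_same_Re_iff[of a2 B a3 0 Y] Y Y0
          by (auto simp: a2_def a3_def)
        then have "V B Y = -\<i> * contour_integral (linepath a2 a3) f"
          unfolding V_def by (rule integral_unique)
        then show ?thesis by simp
      qed
      have c3: "contour_integral (linepath a3 a4) f = - H Y"
      proof -
        have ci': "f contour_integrable_on linepath a4 a3"
          using cs(3) contour_integrable_continuous_linepath closed_segment_commute by metis
        then have "(f has_contour_integral contour_integral (linepath a4 a3) f) (linepath a4 a3)"
          using has_contour_integral_integral by blast
        then have "((\<lambda>x. f (Complex x Y)) has_integral contour_integral (linepath a4 a3) f) {-A..B}"
          using has_contour_integral_linepath_same_Im_iff'[of "-A" B f _ Y] A B M
          by (auto simp: a4_def a3_def)
        then have "H Y = contour_integral (linepath a4 a3) f"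
          unfolding H_def by (rule integral_unique)
        then show ?thesis using contour_integral_reverse_linepath[OF cs(3)] by simp
      qed
      have c4: "contour_integral (linepath a4 a1) f = - \<i> * V (-A) Y"
      proof -
        have cs': "continuous_on (closed_segment a1 a4) f"
          using cs(4) closed_segment_commute by metis
        then have ci': "f contour_integrable_on linepath a1 a4"
          using contour_integrable_continuous_linepath by blast
        then have "(f has_contour_integral contour_integral (linepath a1 a4) f) (linepath a1 a4)"
          using has_contour_integral_integral by blast
        then have "((\<lambda>y. f (Complex (-A) y)) has_integral (-\<i> * contour_integral (linepath a1 a4) f)) {0..Y}"
          using has_contour_integral_linepath_same_Re_iff[of a1 "-A" a4 0 Y] Y Y0
          by (auto simp: a1_def a4_def)
        then have "V (-A) Y = -\<i> * contour_integral (linepath a1 a4) f"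
          unfolding V_def by (rule integral_unique)
        then show ?thesis using contour_integral_reverse_linepath[OF cs'] by simp
      qed
      show ?thesis using res2 split c1 c2 c3 c4 by (simp add: algebra_simps)
    qed
    have VB: "(V B \<longlongrightarrow> F B) at_top"
      using RF[of B] A B M unfolding has_improper_integral_0_inf_def V_def by auto
    have VA: "(V (-A) \<longlongrightarrow> F (-A)) at_top"
      using RF[of "-A"] A B M unfolding has_improper_integral_0_inf_def V_def by auto
    have HY: "(H \<longlongrightarrow> 0) at_top" unfolding H_def using cond_ii by blast
    have lim: "((\<lambda>Y. \<Sigma> - \<i> * V B Y + H Y + \<i> * V (-A) Y) \<longlongrightarrow> \<Sigma> - \<i> * F B + 0 + \<i> * F (-A)) at_top"
      by (intro tendsto_intros VB VA HY)
    have ev: "eventually (\<lambda>Y. \<Sigma> - \<i> * V B Y + H Y + \<i> * V (-A) Y = I) at_top"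
      using eq eventually_at_top_linorder by (metis (mono_tags, lifting))
    have "((\<lambda>Y::real. I) \<longlongrightarrow> \<Sigma> - \<i> * F B + 0 + \<i> * F (-A)) at_top"
      using iffD1[OF tendsto_cong[OF ev] lim] .
    then have "I = \<Sigma> - \<i> * F B + 0 + \<i> * F (-A)"
      using tendsto_const tendsto_unique trivial_limit_at_top_linorder by blast
    then show ?thesis unfolding I_def by simp
  qed
  have ev2: "eventually (\<lambda>p. \<Sigma> - \<i> * F (snd p) + \<i> * F (- fst p)
       = (\<lambda>(A, B). integral {-A..B} (\<lambda>x. f (complex_of_real x))) p) (at_top \<times>\<^sub>F at_top)"
  proof -
    have "eventually (\<lambda>p. fst p \<ge> M \<and> snd p \<ge> M) (at_top \<times>\<^sub>F at_top)"
      by (rule eventually_prodI) (auto simp: eventually_ge_at_top)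
    then show ?thesis by eventually_elim (auto simp: key)
  qed
  have l1: "((\<lambda>p. F (snd p)) \<longlongrightarrow> 0) (at_top \<times>\<^sub>F at_top)"
    using filterlim_compose[OF Ftop filterlim_snd] .
  have l2: "((\<lambda>p. F (- fst p)) \<longlongrightarrow> 0) (at_top \<times>\<^sub>F at_top)"
    using filterlim_compose[OF Fbot filterlim_compose[OF filterlim_uminus_at_bot_at_top filterlim_fst]] .
  have "((\<lambda>p. \<Sigma> - \<i> * F (snd p) + \<i> * F (- fst p)) \<longlongrightarrow> \<Sigma> - \<i> * 0 + \<i> * 0) (at_top \<times>\<^sub>F at_top)"
    by (intro tendsto_intros l1 l2)
  then have "((\<lambda>(A, B). integral {-A..B} (\<lambda>x. f (complex_of_real x))) \<longlongrightarrow> \<Sigma>) (at_top \<times>\<^sub>F at_top)"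
    using tendsto_cong[OF ev2] by simp
  then show ?thesis using intg unfolding \<Sigma>_def by blast
qed

end
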